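(* With high probability, any two distinct vertices each of degree at most $2$ in $G_{t_0}$ are at distance greater than $10$ in $G_{t_1}$.
   Context: The random graph process: $E_0=\emptyset$, $E_m=E_{m-1}\cup\{e_m\}$ with $e_m$ uniform among edges of $K_n$ not in $E_{m-1}$, and $G_m=([n],E_m)$. Logarithms are natural. $t_0=\frac n2(\log n-2\log\log n)$, $t_1=\frac n2(\log n+2\log\log n)$. "With high probability" means with probability $1-o(1)$ as $n\to\infty$. *)

theory Defs
  imports "HOL-Probability.Probability"
begin

text \<open>Vertex set [n] rendered as {0..<n}; edges of K_n are 2-element subsets.\<close>
definition Kn_edges :: "nat \<Rightarrow> nat set set" where
  "Kn_edges n = {e. e \<subseteq> {..<n} \<and> card e = 2}"

fun graph_process :: "nat \<Rightarrow> nat \<Rightarrow> nat set list pmf" where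
  "graph_process n 0 = return_pmf []"
| "graph_process n (Suc m) =
     bind_pmf (graph_process n m)
       (\<lambda>es. map_pmf (\<lambda>e. es @ [e]) (pmf_of_set (Kn_edges n - set es)))"

definition degree :: "nat set set \<Rightarrow> nat \<Rightarrow> nat" where
  "degree E v = card {e \<in> E. v \<in> e}"

definition walk_of_len :: "nat set set \<Rightarrow> nat \<Rightarrow> nat \<Rightarrow> nat \<Rightarrow> bool" where
  "walk_of_len E u v k = (\<exists>xs. length xs = Suc k \<and> hd xs = u \<and> last xs = v \<and>
      (\<forall>i<k. {xs ! i, xs ! Suc i} \<in> E))"

text \<open>Graph distance (infinite if no path).\<close>
definition gdist :: "nat set set \<Rightarrow> nat \<Rightarrow> nat \<Rightarrow> enat" where
  "gdist E u v = (INF k \<in> {k. walk_of_len E u v k}. enat k)"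

definition t0 :: "nat \<Rightarrow> nat" where
  "t0 n = nat \<lfloor>real n / 2 * (ln (real n) - 2 * ln (ln (real n)))\<rfloor>"

definition t1 :: "nat \<Rightarrow> nat" where
  "t1 n = nat \<lfloor>real n / 2 * (ln (real n) + 2 * ln (ln (real n)))\<rfloor>"

end

theory Submission
  imports Defs "HOL-Real_Asymp.Real_Asymp"
begin


lemma prob_bind_le:
  assumes "\<And>x. x \<in> set_pmf p \<Longrightarrow> measure_pmf.prob (f x) A \<le> c * indicator B x" "c \<ge> 0"
  shows "measure_pmf.prob (bind_pmf p f) A \<le> c * measure_pmf.prob p B"
proof -
  have "emeasure (measure_pmf (bind_pmf p f)) A = (\<integral>\<^sup>+x. emeasure (measure_pmf (f x)) A \<partial>measure_pmf p)"
    by simp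
  also have "\<dots> \<le> (\<integral>\<^sup>+x. ennreal c * indicator B x \<partial>measure_pmf p)"
  proof (rule nn_integral_mono_AE)
    show "AE x in measure_pmf p. emeasure (measure_pmf (f x)) A \<le> ennreal c * indicator B x"
    proof (rule AE_pmfI)
      fix x assume x: "x \<in> set_pmf p"
      have "emeasure (measure_pmf (f x)) A = ennreal (measure_pmf.prob (f x) A)"
        by (simp add: measure_pmf.emeasure_eq_measure)
      also have "\<dots> \<le> ennreal (c * indicator B x)" using assms(1)[OF x] by (rule ennreal_leI)
      also have "\<dots> = ennreal c * indicator B x" by (simp add: indicator_def)
      finally show "emeasure (measure_pmf (f x)) A \<le> ennreal c * indicator B x" .
    qed
  qed
  also have "\<dots> = ennreal c * emeasure (measure_pmf p) B"
    by (simp add: nn_integral_cmult_indicator)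
  also have "\<dots> = ennreal (c * measure_pmf.prob p B)"
    using assms(2) by (simp add: measure_pmf.emeasure_eq_measure ennreal_mult)
  finally show ?thesis
    by (simp add: measure_pmf.emeasure_eq_measure mult_nonneg_nonneg assms(2))
qed

lemma finite_Kn: "finite (Kn_edges n)"
  unfolding Kn_edges_def by (rule finite_subset[of _ "Pow {..<n}"]) auto

lemma card_Kn: "card (Kn_edges n) = n choose 2"
  unfolding Kn_edges_def using n_subsets[of "{..<n}" 2] by simp

lemma gp_support:
  "m \<le> card (Kn_edges n) \<Longrightarrow> es \<in> set_pmf (graph_process n m) \<Longrightarrow>
     length es = m \<and> distinct es \<and> set es \<subseteq> Kn_edges n"
proof (induction m arbitrary: es)
  case 0 then show ?case by simp
next
  case (Suc m)
  from Suc.prems(2) obtain xs e where xs: "xs \<in> set_pmf (graph_process n m)"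
    and e: "e \<in> set_pmf (pmf_of_set (Kn_edges n - set xs))" and es: "es = xs @ [e]" by auto
  have IH: "length xs = m \<and> distinct xs \<and> set xs \<subseteq> Kn_edges n" using Suc xs by simp
  have "card (set xs) = m" using IH distinct_card by blast
  then have "card (Kn_edges n - set xs) = card (Kn_edges n) - m"
    using IH finite_Kn by (simp add: card_Diff_subset)
  then have "Kn_edges n - set xs \<noteq> {}" using Suc.prems(1) by (metis Suc_le_lessD card.empty zero_less_diff less_numeral_extra(3))
  then have "e \<in> Kn_edges n - set xs" using e finite_Kn by simp
  then show ?case using IH es by auto
qed

definition Ev :: "(nat \<Rightarrow> nat set option) \<Rightarrow> nat \<Rightarrow> nat set set \<Rightarrow> nat \<Rightarrow> nat set list set" where
  "Ev sp T D m = {es. (\<forall>p<m. \<forall>e. sp p = Some e \<longrightarrow> es!p = e) \<and>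
                      (\<forall>q<m. q < T \<longrightarrow> sp q = None \<longrightarrow> es!q \<notin> D)}"

definition fac :: "(nat \<Rightarrow> nat set option) \<Rightarrow> nat \<Rightarrow> nat set set \<Rightarrow> nat \<Rightarrow> nat \<Rightarrow> real" where
  "fac sp T D N p = (case sp p of Some _ \<Rightarrow> 1 / real (N - p)
       | None \<Rightarrow> (if p < T then 1 - real (card D) / real N else 1))"

lemma Ev_Suc:
  assumes "length es = m"
  shows "es @ [e] \<in> Ev sp T D (Suc m) \<longleftrightarrow> es \<in> Ev sp T D m \<and>
     (\<forall>e'. sp m = Some e' \<longrightarrow> e = e') \<and> (m < T \<longrightarrow> sp m = None \<longrightarrow> e \<notin> D)"
  using assms unfolding Ev_def
  by (auto simp: nth_append less_Suc_eq)

lemma fac_nonneg: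
  assumes "D \<subseteq> Kn_edges n"
  shows "fac sp T D (card (Kn_edges n)) p \<ge> 0"
proof -
  have "card D \<le> card (Kn_edges n)" using assms finite_Kn card_mono by blast
  then show ?thesis unfolding fac_def
    by (auto split: option.split simp: divide_le_eq_1)
qed

lemma Ev_bound:
  assumes D: "D \<subseteq> Kn_edges n" and spD: "\<And>p e. sp p = Some e \<Longrightarrow> e \<notin> D"
  shows "m \<le> card (Kn_edges n) \<Longrightarrow>
    measure_pmf.prob (graph_process n m) (Ev sp T D m) \<le> (\<Prod>p<m. fac sp T D (card (Kn_edges n)) p)"
proof (induction m)
  case 0 then show ?case by (simp add: Ev_def)
next
  case (Suc m)
  let ?N = "card (Kn_edges n)"
  have IH: "measure_pmf.prob (graph_process n m) (Ev sp T D m) \<le> (\<Prod>p<m. fac sp T D ?N p)"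
    using Suc by simp
  have f0: "fac sp T D ?N m \<ge> 0" using fac_nonneg[OF D] .
  have "measure_pmf.prob (graph_process n (Suc m)) (Ev sp T D (Suc m))
     \<le> fac sp T D ?N m * measure_pmf.prob (graph_process n m) (Ev sp T D m)"
    unfolding graph_process.simps
  proof (rule prob_bind_le[OF _ f0])
    fix es assume es: "es \<in> set_pmf (graph_process n m)"
    then have sup: "length es = m" "distinct es" "set es \<subseteq> Kn_edges n"
      using gp_support Suc.prems by (auto dest: Suc_leD)
    define R where "R = Kn_edges n - set es"
    have cR: "card R = ?N - m" unfolding R_def
      using sup finite_Kn by (simp add: card_Diff_subset distinct_card)
    have Rne: "R \<noteq> {}" using cR Suc.prems by auto
    have Rfin: "finite R" unfolding R_def using finite_Kn by simp
    have pre: "(\<lambda>e. es @ [e]) -` Ev sp T D (Suc m) =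
       (if es \<in> Ev sp T D m then {e. (\<forall>e'. sp m = Some e' \<longrightarrow> e = e') \<and> (m < T \<longrightarrow> sp m = None \<longrightarrow> e \<notin> D)} else {})"
      using Ev_Suc[OF sup(1)] by auto
    show "measure_pmf.prob (map_pmf (\<lambda>e. es @ [e]) (pmf_of_set (Kn_edges n - set es))) (Ev sp T D (Suc m))
          \<le> fac sp T D ?N m * indicator (Ev sp T D m) es"
    proof (cases "es \<in> Ev sp T D m")
      case False then show ?thesis using pre by simp
    next
      case True
      let ?C = "{e. (\<forall>e'. sp m = Some e' \<longrightarrow> e = e') \<and> (m < T \<longrightarrow> sp m = None \<longrightarrow> e \<notin> D)}"
      have P: "measure_pmf.prob (map_pmf (\<lambda>e. es @ [e]) (pmf_of_set R)) (Ev sp T D (Suc m))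
           = card (R \<inter> ?C) / card R"
        using pre True by (simp add: measure_pmf_of_set[OF Rne Rfin])
      have "card (R \<inter> ?C) / card R \<le> fac sp T D ?N m"
      proof (cases "sp m")
        case (Some e')
        have sub1: "R \<inter> ?C \<subseteq> {e'}" using Some by auto
        have "card (R \<inter> ?C) \<le> 1" using card_mono[OF _ sub1] by simp
        then have "real (card (R \<inter> ?C)) / card R \<le> 1 / card R"
          by (simp add: divide_right_mono)
        then show ?thesis using Some cR unfolding fac_def by simp
      next
        case None
        show ?thesis
        proof (cases "m < T")
          case False
          have "card (R \<inter> ?C) \<le> card R" using Rfin by (simp add: card_mono)
          then show ?thesis using None False Rne Rfin unfolding fac_def by (simp add: divide_le_eq_1)
        next
          case True
          have DR: "D \<subseteq> R"
          proof
            fix x assume x: "x \<in> D"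
            have "x \<notin> set es"
            proof
              assume "x \<in> set es"
              then obtain q where q: "q < m" "es ! q = x" using sup(1) by (auto simp: in_set_conv_nth)
              show False
              proof (cases "sp q")
                case (Some e) then show False using \<open>es \<in> Ev sp T D m\<close> q spD x unfolding Ev_def by auto
              next
                case None then show False using \<open>es \<in> Ev sp T D m\<close> q x \<open>m < T\<close> unfolding Ev_def by auto
              qed
            qed
            then show "x \<in> R" using x D unfolding R_def by auto
          qed
          have eq: "R \<inter> ?C = R - D" using None True by auto
          have cRD: "card (R - D) = card R - card D" using DR Rfin by (simp add: card_Diff_subset finite_subset)
          have le: "card D \<le> card R" using DR Rfin card_mono by blast
          have RN: "card R \<le> ?N" using cR by simp
          have Rpos: "card R > 0" using Rne Rfin by (simp add: card_gt_0_iff)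
          have "real (card (R - D)) / card R = 1 - real (card D) / card R"
            using cRD le Rpos by (simp add: field_simps of_nat_diff)
          also have "\<dots> \<le> 1 - real (card D) / ?N"
            using RN Rpos by (simp add: frac_le)
          finally show ?thesis using eq None True unfolding fac_def by simp
        qed
      qed
      then show ?thesis using P True unfolding R_def by simp
    qed
  qed
  also have "\<dots> \<le> fac sp T D ?N m * (\<Prod>p<m. fac sp T D ?N p)"
    using IH f0 by (rule mult_left_mono)
  finally show ?case by (simp add: mult.commute)
qed


lemma prod_fac_bound:
  fixes N M T K d :: nat and D :: "nat set set"
  assumes MN: "M < N" and TM: "T \<le> M" and cP: "card {p. p < M \<and> sp p \<noteq> None} \<le> K"
    and dD: "d \<le> card D" and DN: "card D \<le> N"
  shows "(\<Prod>p<M. fac sp T D N p) \<le> (1 / real (N - M)) ^ card {p. p < M \<and> sp p \<noteq> None}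
           * (1 - real d / N) ^ (T - K)"
proof -
  define P where "P = {p. p < M \<and> sp p \<noteq> None}"
  define x where "x = 1 - real (card D) / N"
  have x0: "0 \<le> x" "x \<le> 1" using DN MN unfolding x_def by (auto simp: divide_le_eq_1)
  have xd: "x \<le> 1 - real d / N" using dD MN unfolding x_def by (simp add: frac_le)
  have PM: "P \<subseteq> {..<M}" unfolding P_def by auto
  have fP: "finite P" using PM finite_subset by blast
  have split: "(\<Prod>p<M. fac sp T D N p) = (\<Prod>p\<in>P. fac sp T D N p) * (\<Prod>p\<in>{..<M}-P. fac sp T D N p)"
    using PM by (metis finite_lessThan prod.subset_diff mult.commute)
  have A1: "(\<Prod>p\<in>P. fac sp T D N p) \<le> (\<Prod>p\<in>P. 1 / real (N - M))"
  proof (rule prod_mono)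
    fix p assume p: "p \<in> P"
    then obtain e where e: "sp p = Some e" and pM: "p < M" unfolding P_def by auto
    have "real (N - M) \<le> real (N - p)" using pM MN by simp
    moreover have "real (N - M) > 0" using MN by simp
    ultimately have "1 / real (N - p) \<le> 1 / real (N - M)" by (simp add: frac_le)
    then show "0 \<le> fac sp T D N p \<and> fac sp T D N p \<le> 1 / real (N - M)"
      using e unfolding fac_def by simp
  qed
  have eq2: "(\<Prod>p\<in>{..<M}-P. fac sp T D N p) = (\<Prod>p\<in>{..<M}-P. if p < T then x else 1)"
    by (rule prod.cong) (auto simp: fac_def P_def x_def)
  also have "\<dots> = x ^ card (({..<M} - P) \<inter> {p. p < T})"
    by (simp add: prod.If_cases Int_def)
  also have "\<dots> \<le> x ^ (T - K)"
  proof (rule power_decreasing[OF _ x0])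
    have "{..<T} - P \<subseteq> ({..<M} - P) \<inter> {p. p < T}" using TM by auto
    then have "card ({..<T} - P) \<le> card (({..<M} - P) \<inter> {p. p < T})" by (intro card_mono) auto
    moreover have "card ({..<T} - P) \<ge> T - card P"
      using card_Diff_subset_Int[of P "{..<T}"] fP
      by (metis card_lessThan diff_card_le_card_Diff finite_lessThan)
    ultimately show "T - K \<le> card (({..<M} - P) \<inter> {p. p < T})" using cP unfolding P_def by linarith
  qed
  also have "\<dots> \<le> (1 - real d / N) ^ (T - K)" using x0 xd by (simp add: power_mono)
  finally have A2: "(\<Prod>p\<in>{..<M}-P. fac sp T D N p) \<le> (1 - real d / N) ^ (T - K)" .
  have nn1: "0 \<le> (\<Prod>p\<in>P. fac sp T D N p)"
    by (rule prod_nonneg) (use A1 in \<open>auto simp: fac_def P_def\<close>)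
  have nn2: "0 \<le> (\<Prod>p\<in>{..<M}-P. fac sp T D N p)" using eq2 x0 by (simp add: prod_nonneg)
  have "(\<Prod>p<M. fac sp T D N p) \<le> (\<Prod>p\<in>P. 1 / real (N - M)) * (1 - real d / N) ^ (T - K)"
    unfolding split using A1 A2 nn1 nn2 by (intro mult_mono) auto
  then show ?thesis unfolding P_def by simp
qed


fun pe :: "'a list \<Rightarrow> 'a set list" where
  "pe (x # y # r) = {x, y} # pe (y # r)"
| "pe _ = []"

lemma pe_length: "length (pe xs) = length xs - 1"
  by (induction xs rule: pe.induct) auto

lemma pe_nth: "i < length xs - 1 \<Longrightarrow> pe xs ! i = {xs ! i, xs ! Suc i}"
proof (induction xs arbitrary: i rule: pe.induct)
  case (1 x y r) then show ?case by (cases i) auto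
qed auto

lemma pe_append: "pe (a @ x # c) = pe (a @ [x]) @ pe (x # c)"
proof (induction a)
  case Nil then show ?case by (cases c) auto
next
  case (Cons y a) then show ?case by (cases a) auto
qed

lemma pe_subset: "e \<in> set (pe xs) \<Longrightarrow> e \<subseteq> set xs"
  by (induction xs rule: pe.induct) auto

lemma pe_distinct: "distinct xs \<Longrightarrow> distinct (pe xs)"
proof (induction xs rule: pe.induct)
  case (1 x y r)
  have "{x, y} \<notin> set (pe (y # r))"
  proof
    assume "{x, y} \<in> set (pe (y # r))"
    then have "x \<in> set (y # r)" using pe_subset by blast
    then show False using 1 by simp
  qed
  then show ?case using 1 by simp
qed auto

lemma pe_cover: "length xs \<ge> 2 \<Longrightarrow> set xs = \<Union>(set (pe xs))"
proof (induction xs rule: pe.induct)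
  case (1 x y r)
  show ?case
  proof (cases r)
    case Nil then show ?thesis by simp
  next
    case (Cons z r') then show ?thesis using 1 by auto
  qed
qed auto

lemma walk_pe: "walk_of_len E u v k \<longleftrightarrow>
   (\<exists>xs. length xs = Suc k \<and> hd xs = u \<and> last xs = v \<and> set (pe xs) \<subseteq> E)"
proof -
  have "(\<forall>i<k. {xs ! i, xs ! Suc i} \<in> E) \<longleftrightarrow> set (pe xs) \<subseteq> E" if "length xs = Suc k" for xs
  proof
    assume H: "\<forall>i<k. {xs ! i, xs ! Suc i} \<in> E"
    show "set (pe xs) \<subseteq> E"
    proof
      fix e assume "e \<in> set (pe xs)"
      then obtain i where "i < length (pe xs)" "e = pe xs ! i" by (auto simp: in_set_conv_nth)
      then show "e \<in> E" using H that by (simp add: pe_length pe_nth)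
    qed
  next
    assume H: "set (pe xs) \<subseteq> E"
    show "\<forall>i<k. {xs ! i, xs ! Suc i} \<in> E"
    proof (intro allI impI)
      fix i assume "i < k"
      then have "pe xs ! i \<in> set (pe xs)" using that by (simp add: pe_length)
      then show "{xs ! i, xs ! Suc i} \<in> E" using H that \<open>i < k\<close> by (auto simp: pe_nth)
    qed
  qed
  then show ?thesis unfolding walk_of_len_def by metis
qed

lemma walk_to_path:
  "length xs = Suc k \<Longrightarrow> set (pe xs) \<subseteq> E \<Longrightarrow>
   \<exists>ys. length ys \<le> Suc k \<and> hd ys = hd xs \<and> last ys = last xs \<and> distinct ys \<and> ys \<noteq> [] \<and> set (pe ys) \<subseteq> E"
proof (induction k arbitrary: xs rule: less_induct)
  case (less k)
  show ?case
  proof (cases "distinct xs")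
    case True then show ?thesis using less.prems by (intro exI[of _ xs]) auto
  next
    case False
    then obtain a x b c where xs: "xs = a @ [x] @ b @ [x] @ c" using not_distinct_decomp by blast
    define ys where "ys = a @ x # c"
    have "pe xs = pe (a @ [x]) @ pe (x # b @ [x]) @ pe (x # c)"
      unfolding xs using pe_append[of a x "b @ x # c"] pe_append[of "x # b" x c] by simp
    then have pys: "set (pe ys) \<subseteq> E" using less.prems(2) unfolding ys_def
      by (auto simp: pe_append[of a x c])
    have lys: "length ys = Suc (k - Suc (length b))" "k - Suc (length b) < k"
      using less.prems(1) unfolding xs ys_def by auto
    have hl: "hd ys = hd xs" "last ys = last xs" unfolding xs ys_def
      by (cases a; simp)+
    obtain zs where "length zs \<le> Suc (k - Suc (length b))" "hd zs = hd ys" "last zs = last ys" "distinct zs" "zs \<noteq> []"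
      "set (pe zs) \<subseteq> E"
      using less.IH[OF lys(2) lys(1) pys] by blast
    then show ?thesis using hl lys by (intro exI[of _ zs]) auto
  qed
qed


lemma path_exists:
  assumes Kn: "set es \<subseteq> Kn_edges n" and uv: "u \<noteq> v" and g: "\<not> gdist (set es) u v > 10"
  shows "\<exists>xs. 2 \<le> length xs \<and> length xs \<le> 11 \<and> hd xs = u \<and> last xs = v \<and> distinct xs
           \<and> set xs \<subseteq> {..<n} \<and> set (pe xs) \<subseteq> set es"
proof -
  have "(INF k \<in> {k. walk_of_len (set es) u v k}. enat k) < 11"
  proof -
    have "(INF k \<in> {k. walk_of_len (set es) u v k}. enat k) \<le> 10" using g unfolding gdist_def by (simp add: not_less)
    moreover have "(10::enat) < 11" by simp
    ultimately show ?thesis by (rule le_less_trans)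
  qed
  then obtain k where k: "walk_of_len (set es) u v k" "enat k < 11" by (auto simp: INF_less_iff)
  have k10: "k \<le> 10" using k(2) by (simp add: numeral_eq_enat)
  obtain xs where xs: "length xs = Suc k" "hd xs = u" "last xs = v" "set (pe xs) \<subseteq> set es"
    using k(1) walk_pe by metis
  obtain ys where ys: "length ys \<le> Suc k" "hd ys = u" "last ys = v" "distinct ys" "ys \<noteq> []"
     "set (pe ys) \<subseteq> set es"
    using walk_to_path[OF xs(1) xs(4)] xs by metis
  have l2: "length ys \<ge> 2"
  proof (rule ccontr)
    assume "\<not> length ys \<ge> 2"
    then have "length ys = 1" using ys(5) by (cases ys) (auto simp: not_less_eq_eq)
    then obtain y where "ys = [y]" by (metis One_nat_def length_0_conv length_Suc_conv)
    then show False using ys uv by simp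
  qed
  have "set ys \<subseteq> {..<n}"
  proof
    fix x assume "x \<in> set ys"
    then obtain e where e: "e \<in> set (pe ys)" "x \<in> e" using pe_cover[OF l2] by auto
    then have "e \<in> Kn_edges n" using ys(6) Kn by auto
    then show "x \<in> {..<n}" using e(2) unfolding Kn_edges_def by auto
  qed
  then show ?thesis using ys l2 k10 by (intro exI[of _ ys]) auto
qed

definition Inc :: "nat \<Rightarrow> nat \<Rightarrow> nat \<Rightarrow> nat set set" where
  "Inc n u v = {e \<in> Kn_edges n. u \<in> e \<or> v \<in> e}"

lemma Inc_upper: "card (Inc n u v) \<le> 2 * n"
proof -
  have "Inc n u v \<subseteq> (\<lambda>w. {u, w}) ` {..<n} \<union> (\<lambda>w. {v, w}) ` {..<n}"
  proof
    fix e assume "e \<in> Inc n u v"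
    then have e: "e \<subseteq> {..<n}" "card e = 2" "u \<in> e \<or> v \<in> e" unfolding Inc_def Kn_edges_def by auto
    then obtain a b where ab: "e = {a, b}" "a \<noteq> b" by (meson card_2_iff)
    show "e \<in> (\<lambda>w. {u, w}) ` {..<n} \<union> (\<lambda>w. {v, w}) ` {..<n}"
      using e ab by (auto simp: insert_commute)
  qed
  then have "card (Inc n u v) \<le> card ((\<lambda>w. {u, w}) ` {..<n} \<union> (\<lambda>w. {v, w}) ` {..<n})"
    by (intro card_mono) auto
  also have "\<dots> \<le> card ((\<lambda>w. {u, w}) ` {..<n}) + card ((\<lambda>w. {v, w}) ` {..<n})" by (rule card_Un_le)
  also have "\<dots> \<le> n + n" by (intro add_mono) (metis card_image_le card_lessThan finite_lessThan)+
  finally show ?thesis by simp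
qed

lemma Inc_lower: assumes "u < n" "v < n" "u \<noteq> v" shows "card (Inc n u v) \<ge> 2 * n - 3"
proof -
  let ?A = "(\<lambda>w. {u, w}) ` ({..<n} - {u})" and ?B = "(\<lambda>w. {v, w}) ` ({..<n} - {u, v})"
  have sub: "?A \<union> ?B \<subseteq> Inc n u v" using assms unfolding Inc_def Kn_edges_def by auto
  have cA: "card ?A = n - 1"
    by (subst card_image) (auto simp: inj_on_def doubleton_eq_iff assms)
  have cB: "card ?B = n - 2"
    by (subst card_image) (auto simp: inj_on_def doubleton_eq_iff assms card_Diff_subset)
  have disj: "?A \<inter> ?B = {}" using assms by (auto simp: doubleton_eq_iff)
  have "card (?A \<union> ?B) = (n - 1) + (n - 2)" using cA cB disj by (simp add: card_Un_disjoint)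
  moreover have "card (?A \<union> ?B) \<le> card (Inc n u v)"
    by (rule card_mono[OF _ sub]) (simp add: Inc_def finite_Kn)
  ultimately show ?thesis by linarith
qed


definition Idx :: "nat \<Rightarrow> nat \<Rightarrow> nat \<Rightarrow> (nat list \<times> nat list \<times> nat set list \<times> nat list) set" where
 "Idx n j b = {(xs,ps,as,rs). set xs \<subseteq> {..<n} \<and> length xs = Suc j \<and> distinct xs \<and>
     set ps \<subseteq> {..<t1 n} \<and> length ps = j \<and> set as \<subseteq> Inc n (hd xs) (last xs) \<and> length as = b \<and>
     set rs \<subseteq> {..<t0 n} \<and> length rs = b \<and> distinct (ps @ rs)}"

definition Dset :: "nat \<Rightarrow> nat list \<Rightarrow> nat set list \<Rightarrow> nat set set" where
  "Dset n xs as = Inc n (hd xs) (last xs) - set (pe xs) - set as"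

definition EvI :: "nat \<Rightarrow> (nat list \<times> nat list \<times> nat set list \<times> nat list) \<Rightarrow> nat set list set" where
  "EvI n i = (case i of (xs,ps,as,rs) \<Rightarrow>
      Ev (map_of (zip (ps @ rs) (pe xs @ as))) (t0 n) (Dset n xs as) (t1 n))"

definition BAD :: "nat \<Rightarrow> nat set list set" where
  "BAD n = {es. \<exists>u v. u < n \<and> v < n \<and> u \<noteq> v \<and>
                 degree (set (take (t0 n) es)) u \<le> 2 \<and>
                 degree (set (take (t0 n) es)) v \<le> 2 \<and>
                 \<not> gdist (set es) u v > 10}"

lemma zip_map_self: "(p, e) \<in> set (zip (map f L) L) \<Longrightarrow> e \<in> set L \<and> p = f e"
  by (induction L) auto

lemma map_of_zip_SomeD: "map_of (zip ks vs) p = Some e \<Longrightarrow> e \<in> set vs"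
  by (auto dest!: map_of_SomeD set_zip_rightD)

lemma EvI_bound:
  assumes i: "i \<in> Idx n j b" and j: "1 \<le> j" "j \<le> 10" and b: "b \<le> 4"
    and tN: "t1 n < card (Kn_edges n)" and tt: "t0 n \<le> t1 n"
  shows "measure_pmf.prob (graph_process n (t1 n)) (EvI n i)
     \<le> (1 / real (card (Kn_edges n) - t1 n)) ^ (j + b) * (1 - real (2 * n - 17) / card (Kn_edges n)) ^ (t0 n - 14)"
proof -
  obtain xs ps as rs where iq: "i = (xs, ps, as, rs)" by (cases i) auto
  note I = i[unfolded iq Idx_def, simplified]
  define sp where "sp = map_of (zip (ps @ rs) (pe xs @ as))"
  define D where "D = Dset n xs as"
  let ?N = "card (Kn_edges n)"
  have D: "D \<subseteq> Kn_edges n" unfolding D_def Dset_def Inc_def by auto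
  have spD: "\<And>p e. sp p = Some e \<Longrightarrow> e \<notin> D"
    unfolding sp_def D_def Dset_def by (auto dest!: map_of_zip_SomeD)
  have "measure_pmf.prob (graph_process n (t1 n)) (EvI n i) \<le> (\<Prod>p<t1 n. fac sp (t0 n) D ?N p)"
    unfolding EvI_def iq using Ev_bound[OF D spD, where m="t1 n" and T="t0 n"] tN unfolding sp_def D_def by simp
  also have "\<dots> \<le> (1 / real (?N - t1 n)) ^ card {p. p < t1 n \<and> sp p \<noteq> None}
           * (1 - real (2 * n - 17) / ?N) ^ (t0 n - 14)"
  proof (rule prod_fac_bound[OF tN tt])
    have lens: "length (ps @ rs) = length (pe xs @ as)" using I by (simp add: pe_length)
    have "{p. p < t1 n \<and> sp p \<noteq> None} = set (ps @ rs)"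
    proof -
      have "{p. sp p \<noteq> None} = set (ps @ rs)" using dom_map_of_zip[OF lens] unfolding sp_def dom_def by simp
      moreover have "set (ps @ rs) \<subseteq> {..<t1 n}" using I tt by auto
      ultimately show ?thesis by auto
    qed
    then have cP: "card {p. p < t1 n \<and> sp p \<noteq> None} = j + b"
      using I distinct_card[of "ps @ rs"] by simp
    then show "card {p. p < t1 n \<and> sp p \<noteq> None} \<le> 14" using j b by simp
    have hl: "hd xs < n" "last xs < n" "hd xs \<noteq> last xs"
    proof -
      have ne: "xs \<noteq> []" using I by auto
      have "hd xs \<in> set xs" "last xs \<in> set xs" using ne by auto
      then show "hd xs < n" "last xs < n" using I by auto
      show "hd xs \<noteq> last xs"
      proof
        assume "hd xs = last xs"
        then have "xs ! 0 = xs ! (length xs - 1)" using ne by (simp add: hd_conv_nth last_conv_nth)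
        then show False using I j by (simp add: nth_eq_iff_index_eq)
      qed
    qed
    have cInc: "2 * n - 3 \<le> card (Inc n (hd xs) (last xs))" using Inc_lower[OF hl] .
    have finInc: "finite (Inc n (hd xs) (last xs))" unfolding Inc_def using finite_Kn by simp
    have "card (Inc n (hd xs) (last xs)) - card (set (pe xs)) \<le> card (Inc n (hd xs) (last xs) - set (pe xs))"
      by (rule diff_card_le_card_Diff) simp
    moreover have "card (Inc n (hd xs) (last xs) - set (pe xs)) - card (set as) \<le> card D"
      unfolding D_def Dset_def by (rule diff_card_le_card_Diff) simp
    moreover have "card (set (pe xs)) \<le> j" using card_length[of "pe xs"] I by (simp add: pe_length)
    moreover have "card (set as) \<le> b" using card_length[of as] I by simp
    ultimately show "2 * n - 17 \<le> card D" using cInc j b by linarith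
    show "card D \<le> ?N" using D finite_Kn card_mono by blast
  qed
  also have "card {p. p < t1 n \<and> sp p \<noteq> None} = j + b"
  proof -
    have lens: "length (ps @ rs) = length (pe xs @ as)" using I by (simp add: pe_length)
    have "{p. sp p \<noteq> None} = set (ps @ rs)" using dom_map_of_zip[OF lens] unfolding sp_def dom_def by simp
    moreover have "set (ps @ rs) \<subseteq> {..<t1 n}" using I tt by auto
    ultimately have "{p. p < t1 n \<and> sp p \<noteq> None} = set (ps @ rs)" by auto
    then show ?thesis using I distinct_card[of "ps @ rs"] by simp
  qed
  finally show ?thesis .
qed


lemma cover:
  assumes es: "es \<in> set_pmf (graph_process n (t1 n))" and tN: "t1 n \<le> card (Kn_edges n)"
    and tt: "t0 n \<le> t1 n" and bad: "es \<in> BAD n"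
  shows "\<exists>j\<in>{1..10}. \<exists>b\<in>{..4}. \<exists>i\<in>Idx n j b. es \<in> EvI n i"
proof -
  have sup: "length es = t1 n" "distinct es" "set es \<subseteq> Kn_edges n" using gp_support[OF tN es] by auto
  obtain u v where uv: "u < n" "v < n" "u \<noteq> v" and du: "degree (set (take (t0 n) es)) u \<le> 2"
    and dv: "degree (set (take (t0 n) es)) v \<le> 2" and g: "\<not> gdist (set es) u v > 10"
    using bad unfolding BAD_def by auto
  obtain xs where xs: "2 \<le> length xs" "length xs \<le> 11" "hd xs = u" "last xs = v" "distinct xs"
     "set xs \<subseteq> {..<n}" "set (pe xs) \<subseteq> set es"
    using path_exists[OF sup(3) uv(3) g] by blast
  define S where "S = set (take (t0 n) es)"
  define Bs where "Bs = S \<inter> (Inc n u v - set (pe xs))"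
  have finB: "finite Bs" unfolding Bs_def S_def by simp
  obtain as where as: "distinct as" "set as = Bs" using finite_distinct_list[OF finB] by blast
  define pos where "pos e = (SOME p. p < length es \<and> es ! p = e)" for e
  have pos: "pos e < length es \<and> es ! pos e = e" if "e \<in> set es" for e
  proof -
    have "\<exists>p. p < length es \<and> es ! p = e" using that by (simp add: in_set_conv_nth)
    then show ?thesis unfolding pos_def by (rule someI_ex)
  qed
  have pos_uniq: "pos (es ! q) = q" if "q < length es" for q
    using pos[of "es ! q"] that sup(2) nth_eq_iff_index_eq[of es "pos (es ! q)" q] by simp
  define j where "j = length xs - 1"
  define b where "b = length as"
  define ps where "ps = map pos (pe xs)"
  define rs where "rs = map pos as"
  have S_sub: "S \<subseteq> set es" unfolding S_def by (simp add: set_take_subset)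
  have as_es: "set as \<subseteq> set es" using as S_sub unfolding Bs_def by auto
  have b4: "b \<le> 4"
  proof -
    have "Bs \<subseteq> {e \<in> S. u \<in> e} \<union> {e \<in> S. v \<in> e}" unfolding Bs_def Inc_def by auto
    then have "card Bs \<le> card ({e \<in> S. u \<in> e} \<union> {e \<in> S. v \<in> e})"
      by (intro card_mono) (auto simp: S_def)
    also have "\<dots> \<le> card {e \<in> S. u \<in> e} + card {e \<in> S. v \<in> e}" by (rule card_Un_le)
    also have "\<dots> \<le> 4" using du dv unfolding degree_def S_def by simp
    finally show ?thesis unfolding b_def using as distinct_card by metis
  qed
  have j: "j \<in> {1..10}" using xs unfolding j_def by auto
  have L: "distinct (pe xs @ as)"
    using pe_distinct[OF xs(5)] as unfolding Bs_def by auto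
  have inj: "inj_on pos (set (pe xs @ as))"
  proof (rule inj_onI)
    fix x y assume xy: "x \<in> set (pe xs @ as)" "y \<in> set (pe xs @ as)" "pos x = pos y"
    then have "x \<in> set es" "y \<in> set es" using xs(7) as_es by auto
    then have "es ! pos x = x" "es ! pos y = y" using pos[of x] pos[of y] by blast+
    then show "x = y" using xy(3) by metis
  qed
  have "distinct (map pos (pe xs @ as))" using L inj distinct_map by blast
  then have dpr: "distinct (ps @ rs)" by (simp only: ps_def rs_def map_append)
  have rs_t0: "set rs \<subseteq> {..<t0 n}"
  proof
    fix p assume "p \<in> set rs"
    then obtain a where a: "a \<in> set as" "p = pos a" unfolding rs_def by auto
    then have "a \<in> S" using as unfolding Bs_def by auto
    then obtain q where q: "q < length (take (t0 n) es)" "take (t0 n) es ! q = a" unfolding S_def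
      by (auto simp: in_set_conv_nth)
    have "q < t0 n" "q < length es" using q(1) by auto
    moreover have "es ! q = a" using q by simp
    ultimately show "p \<in> {..<t0 n}" using pos_uniq a by auto
  qed
  have ps_t1: "set ps \<subseteq> {..<t1 n}" unfolding ps_def using pos xs(7) sup(1) by auto
  have idx: "(xs, ps, as, rs) \<in> Idx n j b"
    unfolding Idx_def using xs j dpr rs_t0 ps_t1 as
    by (auto simp: j_def b_def ps_def rs_def pe_length Bs_def)
  have ev: "es \<in> EvI n (xs, ps, as, rs)"
    unfolding EvI_def Ev_def
  proof (simp, intro conjI allI impI)
    fix p e assume "p < t1 n" "map_of (zip (ps @ rs) (pe xs @ as)) p = Some e"
    then have "map_of (zip (map pos (pe xs @ as)) (pe xs @ as)) p = Some e"
      by (simp only: ps_def rs_def map_append)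
    then have "(p, e) \<in> set (zip (map pos (pe xs @ as)) (pe xs @ as))"
      by (rule map_of_SomeD)
    then have pe: "e \<in> set (pe xs @ as) \<and> p = pos e" by (rule zip_map_self)
    then have "e \<in> set es" using xs(7) as_es by auto
    then show "es ! p = e" using pos[of e] pe by simp
  next
    fix q assume q: "q < t1 n" "q < t0 n" "map_of (zip (ps @ rs) (pe xs @ as)) q = None"
    show "es ! q \<notin> Dset n xs as"
    proof
      assume "es ! q \<in> Dset n xs as"
      moreover have "es ! q \<in> S"
      proof -
        have "q < length (take (t0 n) es)" using q sup(1) by simp
        then have "take (t0 n) es ! q \<in> S" unfolding S_def by (rule nth_mem)
        then show ?thesis using q by simp
      qed
      ultimately have "es ! q \<in> Bs" unfolding Dset_def Bs_def using xs by auto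
      then show False using \<open>es ! q \<in> Dset n xs as\<close> as unfolding Dset_def by auto
    qed
  qed
  show ?thesis using j b4 idx ev by blast
qed


definition T1r :: "real \<Rightarrow> real" where "T1r x = x/2*(ln x + 2*ln(ln x))"
definition T0r :: "real \<Rightarrow> real" where "T0r x = x/2*(ln x - 2*ln(ln x))"
definition Nr :: "real \<Rightarrow> real" where "Nr x = x*(x-1)/2"
definition Fr :: "real \<Rightarrow> real" where
  "Fr x = 50 * x * (1 + x * T1r x / (Nr x - T1r x)) ^ 10 * (1 + 2 * x * T0r x / (Nr x - T1r x)) ^ 4
          * exp (- ((2 * x - 17) / Nr x) * (T0r x - 15))"

lemma Fr_lim: "(Fr \<longlongrightarrow> 0) at_top"
  unfolding Fr_def T1r_def T0r_def Nr_def by real_asymp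
lemma ev1: "eventually (\<lambda>x. T1r x < Nr x) at_top"
  unfolding T1r_def Nr_def by real_asymp
lemma ev2: "eventually (\<lambda>x. T0r x \<ge> 15) at_top"
  unfolding T0r_def by real_asymp
lemma ev3: "eventually (\<lambda>x::real. ln (ln x) \<ge> 0) at_top"
proof -
  have "eventually (\<lambda>x::real. ln x \<ge> 1) at_top" using ln_at_top by (simp add: filterlim_at_top)
  moreover have "eventually (\<lambda>x::real. x > 0) at_top" by (rule eventually_gt_at_top)
  ultimately show ?thesis by eventually_elim auto
qed
lemma ev4: "eventually (\<lambda>x::real. x \<ge> 9) at_top"
  by (rule eventually_ge_at_top)

lemma N_real: "real (card (Kn_edges n)) = Nr (real n)"
proof -
  have "even (n * (n - 1))" by auto
  then have "2 * (n * (n - 1) div 2) = n * (n - 1)" by simp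
  then have "real (2 * (n choose 2)) = real (n * (n - 1))" by (simp add: choose_two)
  then show ?thesis unfolding card_Kn Nr_def by (cases n) (auto simp: of_nat_diff algebra_simps)
qed

lemma nat_floor_le: "0 \<le> (z::real) \<Longrightarrow> real (nat \<lfloor>z\<rfloor>) \<le> z"
  by (simp add: of_nat_nat)

lemma t1_le: "0 \<le> T1r (real n) \<Longrightarrow> real (t1 n) \<le> T1r (real n)"
  unfolding t1_def T1r_def by (rule nat_floor_le)

lemma t0_le: "0 \<le> T0r (real n) \<Longrightarrow> real (t0 n) \<le> T0r (real n)"
  unfolding t0_def T0r_def by (rule nat_floor_le)

lemma t0_ge: "real (t0 n) \<ge> T0r (real n) - 1"
  unfolding t0_def T0r_def by linarith

lemma t0_le_t1: "0 \<le> ln (ln (real n)) \<Longrightarrow> t0 n \<le> t1 n"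
  unfolding t0_def t1_def
proof -
  assume "0 \<le> ln (ln (real n))"
  then have "real n / 2 * (ln (real n) - 2 * ln (ln (real n))) \<le> real n / 2 * (ln (real n) + 2 * ln (ln (real n)))"
    by (intro mult_left_mono) auto
  then show "nat \<lfloor>real n / 2 * (ln (real n) - 2 * ln (ln (real n)))\<rfloor> \<le> nat \<lfloor>real n / 2 * (ln (real n) + 2 * ln (ln (real n)))\<rfloor>"
    by (intro nat_mono floor_mono)
qed

lemma Idx_card: "finite (Idx n j b) \<and> card (Idx n j b) \<le> n ^ Suc j * t1 n ^ j * ((2 * n) ^ b * t0 n ^ b)"
proof -
  define X where "X = {xs::nat list. set xs \<subseteq> {..<n} \<and> length xs = Suc j}"
  define P where "P = {ps::nat list. set ps \<subseteq> {..<t1 n} \<and> length ps = j}"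
  define A where "A xs = {as::nat set list. set as \<subseteq> Inc n (hd xs) (last xs) \<and> length as = b}" for xs
  define R where "R = {rs::nat list. set rs \<subseteq> {..<t0 n} \<and> length rs = b}"
  have finInc: "finite (Inc n u v)" for u v unfolding Inc_def using finite_Kn by simp
  have fX: "finite X" unfolding X_def using finite_lists_length_eq by auto
  have cX: "card X = n ^ Suc j" unfolding X_def
    using card_lists_length_eq[of "{..<n}" "Suc j"] by (simp only: card_lessThan finite_lessThan)
  have fP: "finite P" unfolding P_def using finite_lists_length_eq by auto
  have cP: "card P = t1 n ^ j" unfolding P_def
    using card_lists_length_eq[of "{..<t1 n}" j] by (simp only: card_lessThan finite_lessThan)
  have fR: "finite R" unfolding R_def using finite_lists_length_eq by auto
  have cR: "card R = t0 n ^ b" unfolding R_def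
    using card_lists_length_eq[of "{..<t0 n}" b] by (simp only: card_lessThan finite_lessThan)
  have fA: "finite (A xs)" for xs unfolding A_def
    using finite_lists_length_eq[OF finInc] by auto
  have cA: "card (A xs) \<le> (2 * n) ^ b" for xs unfolding A_def
    using card_lists_length_eq[OF finInc] power_mono[OF Inc_upper[of n "hd xs" "last xs"], of b]
    by simp
  have sub: "Idx n j b \<subseteq> Sigma X (\<lambda>xs. P \<times> (A xs \<times> R))"
    unfolding Idx_def X_def P_def A_def R_def by auto
  have fS: "finite (Sigma X (\<lambda>xs. P \<times> (A xs \<times> R)))" using fX fP fA fR by auto
  have "card (Sigma X (\<lambda>xs. P \<times> (A xs \<times> R))) = (\<Sum>xs\<in>X. card P * (card (A xs) * card R))"
    using fX fP fA fR by (simp add: card_cartesian_product)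
  also have "\<dots> \<le> (\<Sum>xs\<in>X. t1 n ^ j * ((2 * n) ^ b * t0 n ^ b))"
  proof (intro sum_mono)
    fix xs show "card P * (card (A xs) * card R) \<le> t1 n ^ j * ((2 * n) ^ b * t0 n ^ b)"
      unfolding cP cR by (intro mult_le_mono order_refl cA)
  qed
  also have "\<dots> = n ^ Suc j * t1 n ^ j * ((2 * n) ^ b * t0 n ^ b)" using cX by simp
  finally show ?thesis using card_mono[OF fS sub] finite_subset[OF sub fS] by simp
qed


lemma bad_bound:
  assumes n9: "real n \<ge> 9" and h1: "T1r (real n) < Nr (real n)" and h2: "T0r (real n) \<ge> 15"
    and h3: "ln (ln (real n)) \<ge> 0"
  shows "measure_pmf.prob (graph_process n (t1 n)) (BAD n) \<le> Fr (real n)"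
proof -
  let ?p = "graph_process n (t1 n)"
  let ?N = "card (Kn_edges n)"
  define x where "x = real n"
  have x9: "x \<ge> 9" using n9 x_def by simp
  have hx1: "T1r x < Nr x" using h1 x_def by simp
  have hx2: "T0r x \<ge> 15" using h2 x_def by simp
  have hx3: "ln (ln x) \<ge> 0" using h3 x_def by simp
  have lnx: "ln x \<ge> 0" using x9 by simp
  have T1nn: "T1r x \<ge> 0" unfolding T1r_def using x9 lnx hx3 by simp
  have t1le: "real (t1 n) \<le> T1r x" using t1_le T1nn x_def by simp
  have NR: "real ?N = Nr x" using N_real x_def by simp
  have "real (t1 n) < real ?N" using t1le hx1 NR by linarith
  then have tN: "t1 n < ?N" by (simp only: of_nat_less_iff)
  have tt: "t0 n \<le> t1 n" using t0_le_t1 h3 by simp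
  have t0le: "real (t0 n) \<le> T0r x" using t0_le[of n] hx2 x_def by simp
  have t0ge: "real (t0 n) \<ge> T0r x - 1" using t0_ge x_def by simp
  define c where "c = real (?N - t1 n)"
  have c_eq: "c = Nr x - real (t1 n)" unfolding c_def using tN NR by (simp add: of_nat_diff)
  have cpos: "Nr x - T1r x \<le> c" "0 < Nr x - T1r x" using c_eq t1le hx1 by auto
  define a where "a = real (2 * n - 17) / real ?N"
  have a_eq: "a = (2 * x - 17) / Nr x" unfolding a_def NR using n9 x_def by (simp add: of_nat_diff)
  have Npos: "Nr x > 0" using cpos T1nn by linarith
  have a0: "0 \<le> a" unfolding a_def by simp
  have a1: "a \<le> 1"
  proof -
    have "2 * x - 17 \<le> 9 * (x - 1) / 2" using x9 by simp
    also have "\<dots> \<le> x * (x - 1) / 2" using x9 by (intro divide_right_mono mult_right_mono) auto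
    finally show ?thesis unfolding a_eq Nr_def using Npos Nr_def by simp
  qed
  define Z where "Z = (1 - a) ^ (t0 n - 14)"
  define g where "g j b = (1 / c) ^ (j + b) * Z" for j b :: nat
  define Xr where "Xr = x * T1r x / (Nr x - T1r x)"
  define Yr where "Yr = 2 * x * T0r x / (Nr x - T1r x)"
  define Zr where "Zr = exp (- a * (T0r x - 15))"
  have Fr_eq: "Fr x = 50 * (x * (1 + Xr) ^ 10 * (1 + Yr) ^ 4 * Zr)"
    unfolding Fr_def Xr_def Yr_def Zr_def a_eq by simp
  have g0: "0 \<le> g j b" for j b unfolding g_def Z_def using cpos a1 by simp
  have cov: "BAD n \<inter> set_pmf ?p \<subseteq> (\<Union>j\<in>{1..10}. \<Union>b\<in>{..4::nat}. \<Union>i\<in>Idx n j b. EvI n i)"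
    using cover[OF _ less_imp_le[OF tN] tt] by blast
  have "measure_pmf.prob ?p (BAD n) = measure_pmf.prob ?p (BAD n \<inter> set_pmf ?p)"
    by (simp add: measure_Int_set_pmf)
  also have "\<dots> \<le> measure_pmf.prob ?p (\<Union>j\<in>{1..10}. \<Union>b\<in>{..4::nat}. \<Union>i\<in>Idx n j b. EvI n i)"
    using cov by (intro measure_pmf.finite_measure_mono) auto
  also have "\<dots> \<le> (\<Sum>j\<in>{1..10}. measure_pmf.prob ?p (\<Union>b\<in>{..4::nat}. \<Union>i\<in>Idx n j b. EvI n i))"
    by (intro measure_pmf.finite_measure_subadditive_finite) auto
  also have "\<dots> \<le> (\<Sum>j\<in>{1..10}. \<Sum>b\<in>{..4::nat}. measure_pmf.prob ?p (\<Union>i\<in>Idx n j b. EvI n i))"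
    by (intro sum_mono measure_pmf.finite_measure_subadditive_finite) auto
  also have "\<dots> \<le> (\<Sum>j\<in>{1..10}. \<Sum>b\<in>{..4::nat}. \<Sum>i\<in>Idx n j b. measure_pmf.prob ?p (EvI n i))"
    using Idx_card by (intro sum_mono measure_pmf.finite_measure_subadditive_finite) auto
  also have "\<dots> \<le> (\<Sum>j\<in>{1..10}. \<Sum>b\<in>{..4::nat}. \<Sum>i\<in>Idx n j b. g j b)"
  proof (intro sum_mono)
    fix j b i assume "j \<in> {1..10::nat}" "b \<in> {..4::nat}" "i \<in> Idx n j b"
    then show "measure_pmf.prob ?p (EvI n i) \<le> g j b"
      using EvI_bound[OF _ _ _ _ tN tt, of i j b] unfolding g_def Z_def a_def c_def by simp
  qed
  also have "\<dots> \<le> (\<Sum>j\<in>{1..10::nat}. \<Sum>b\<in>{..4::nat}. x * (1 + Xr) ^ 10 * (1 + Yr) ^ 4 * Zr)"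
  proof (intro sum_mono)
    fix j b assume jb: "j \<in> {1..10::nat}" "b \<in> {..4::nat}"
    have "(\<Sum>i\<in>Idx n j b. g j b) = real (card (Idx n j b)) * g j b" by simp
    also have "\<dots> \<le> real (n ^ Suc j * t1 n ^ j * ((2 * n) ^ b * t0 n ^ b)) * g j b"
    proof (rule mult_right_mono[OF _ g0])
      have "card (Idx n j b) \<le> n ^ Suc j * t1 n ^ j * ((2 * n) ^ b * t0 n ^ b)" using Idx_card by blast
      then show "real (card (Idx n j b)) \<le> real (n ^ Suc j * t1 n ^ j * ((2 * n) ^ b * t0 n ^ b))"
        by (simp only: of_nat_le_iff)
    qed
    also have "\<dots> = x * (x * real (t1 n) / c) ^ j * (2 * x * real (t0 n) / c) ^ b * Z"
      unfolding g_def x_def by (simp add: power_mult_distrib power_divide power_add field_simps)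
    also have "\<dots> \<le> x * (1 + Xr) ^ 10 * (1 + Yr) ^ 4 * Zr"
    proof -
      have c0: "c > 0" using cpos by linarith
      have X1: "x * real (t1 n) / c \<le> Xr" unfolding Xr_def
        using t1le cpos x9 T1nn by (intro frac_le mult_left_mono mult_nonneg_nonneg) auto
      have Y1: "2 * x * real (t0 n) / c \<le> Yr" unfolding Yr_def
        using t0le cpos x9 hx2 by (intro frac_le mult_left_mono mult_nonneg_nonneg) auto
      have Xnn: "0 \<le> x * real (t1 n) / c" using c0 x9 by simp
      have Ynn: "0 \<le> 2 * x * real (t0 n) / c" using c0 x9 by simp
      have "(x * real (t1 n) / c) ^ j \<le> (1 + Xr) ^ j" using X1 Xnn by (intro power_mono) auto
      also have "\<dots> \<le> (1 + Xr) ^ 10" using jb Xnn X1 by (intro power_increasing) auto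
      finally have XX: "(x * real (t1 n) / c) ^ j \<le> (1 + Xr) ^ 10" .
      have "(2 * x * real (t0 n) / c) ^ b \<le> (1 + Yr) ^ b" using Y1 Ynn by (intro power_mono) auto
      also have "\<dots> \<le> (1 + Yr) ^ 4" using jb Ynn Y1 by (intro power_increasing) auto
      finally have YY: "(2 * x * real (t0 n) / c) ^ b \<le> (1 + Yr) ^ 4" .
      have "Z \<le> exp (- a) ^ (t0 n - 14)" unfolding Z_def using a1
        by (intro power_mono) (auto simp: exp_ge_add_one_self[of "-a", simplified])
      also have "\<dots> = exp (- a * real (t0 n - 14))" by (simp add: exp_of_nat_mult[symmetric] mult.commute)
      also have "\<dots> \<le> Zr"
      proof -
        have "real (t0 n) \<ge> 14" using t0ge hx2 by linarith
        then have "t0 n \<ge> 14" by simp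
        then have "T0r x - 15 \<le> real (t0 n - 14)" using t0ge by (simp add: of_nat_diff)
        then have "- a * real (t0 n - 14) \<le> - a * (T0r x - 15)" using a0
          by (intro mult_left_mono_neg) auto
        then show ?thesis unfolding Zr_def by simp
      qed
      finally have ZZ: "Z \<le> Zr" .
      have Z0: "0 \<le> Z" unfolding Z_def using a1 by simp
      show ?thesis using XX YY ZZ Z0 Xnn Ynn x9 X1 Y1
        by (intro mult_mono mult_nonneg_nonneg zero_le_power) auto
    qed
    finally show "(\<Sum>i\<in>Idx n j b. g j b) \<le> x * (1 + Xr) ^ 10 * (1 + Yr) ^ 4 * Zr" .
  qed
  also have "\<dots> = Fr x" unfolding Fr_eq by simp
  finally show ?thesis unfolding x_def .
qed


theorem mainTheorem11:
  shows "(\<lambda>n. measure_pmf.prob (graph_process n (t1 n))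
            {es. \<forall>u v. u < n \<longrightarrow> v < n \<longrightarrow> u \<noteq> v \<longrightarrow>
                 degree (set (take (t0 n) es)) u \<le> 2 \<longrightarrow>
                 degree (set (take (t0 n) es)) v \<le> 2 \<longrightarrow>
                 gdist (set es) u v > 10}) \<longlonglongrightarrow> 1"
proof -
  have seteq: "{es. \<forall>u v. u < n \<longrightarrow> v < n \<longrightarrow> u \<noteq> v \<longrightarrow>
                 degree (set (take (t0 n) es)) u \<le> 2 \<longrightarrow>
                 degree (set (take (t0 n) es)) v \<le> 2 \<longrightarrow>
                 gdist (set es) u v > 10} = UNIV - BAD n" for n
    unfolding BAD_def by auto
  have ev: "eventually (\<lambda>x::real. x \<ge> 9 \<and> T1r x < Nr x \<and> T0r x \<ge> 15 \<and> ln (ln x) \<ge> 0) at_top"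
    using ev1 ev2 ev3 ev4 by eventually_elim auto
  have evn: "eventually (\<lambda>n. real n \<ge> 9 \<and> T1r (real n) < Nr (real n) \<and> T0r (real n) \<ge> 15
       \<and> ln (ln (real n)) \<ge> 0) sequentially"
    by (rule eventually_compose_filterlim[OF ev filterlim_real_sequentially])
  have Flim: "(\<lambda>n. Fr (real n)) \<longlonglongrightarrow> 0"
    by (rule filterlim_compose[OF Fr_lim filterlim_real_sequentially])
  have "(\<lambda>n. measure_pmf.prob (graph_process n (t1 n)) (BAD n)) \<longlonglongrightarrow> 0"
  proof (rule tendsto_sandwich[OF _ _ tendsto_const Flim])
    show "\<forall>\<^sub>F n in sequentially. 0 \<le> measure_pmf.prob (graph_process n (t1 n)) (BAD n)" by simp
    show "\<forall>\<^sub>F n in sequentially. measure_pmf.prob (graph_process n (t1 n)) (BAD n) \<le> Fr (real n)"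
      using evn by eventually_elim (use bad_bound in blast)
  qed
  then have "(\<lambda>n. 1 - measure_pmf.prob (graph_process n (t1 n)) (BAD n)) \<longlonglongrightarrow> 1 - 0"
    by (intro tendsto_diff tendsto_const)
  moreover have pc: "measure_pmf.prob p (UNIV - A) = 1 - measure_pmf.prob p A" for p :: "'a pmf" and A
    using measure_pmf.prob_compl[of A p] by simp
  ultimately show ?thesis unfolding seteq pc by simp
qed

end
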